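(* Let $\mathbb{C}$ be a locally small category and let $\mathbb{C}_{\mathit{fin}}$ be a full subcategory of $\mathbb{C}$ satisfying (C1)–(C5) below. Let $F \in \mathrm{Ob}(\mathbb{C})$ be homogeneous, locally finite, universal for $\mathbb{C}_{\mathit{fin}}$, and such that its automorphisms are finitely separated. Then the group $\mathrm{Aut}(F)$ endowed with the topology $\tau_F$ is extremely amenable if and only if $\mathbb{C}_{\mathit{fin}}$ has the Ramsey property.
   Context: Write $A \to B$ if $\hom(A,B) \neq \varnothing$. Conditions: (C1) all morphisms of $\mathbb{C}$ are monomorphisms; (C2) $\mathrm{Ob}(\mathbb{C}_{\mathit{fin}})$ is a set; (C3) $\hom(A,B)$ is finite for all $A,B \in \mathrm{Ob}(\mathbb{C}_{\mathit{fin}})$; (C4) for every $F \in \mathrm{Ob}(\mathbb{C})$ there is $A \in \mathrm{Ob}(\mathbb{C}_{\mathit{fin}})$ with $A \to F$; (C5) for every $B \in \mathrm{Ob}(\mathbb{C}_{\mathit{fin}})$ the set $\{A \in \mathrm{Ob}(\mathbb{C}_{\mathit{fin}}) : A \to B\}$ is finite. $F$ is homogeneous if for all $A \in \mathrm{Ob}(\mathbb{C}_{\mathit{fin}})$ and $e_1,e_2 \in \hom(A,F)$ there is $g \in \mathrm{Aut}(F)$ with $g\cdot e_1 = e_2$. $F$ is universal for $\mathbb{C}_{\mathit{fin}}$ if $A \to F$ for all $A \in \mathrm{Ob}(\mathbb{C}_{\mathit{fin}})$. $F$ is locally finite if for all $A,B \in \mathrm{Ob}(\mathbb{C}_{\mathit{fin}})$,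 $e \in \hom(A,F)$, $f \in \hom(B,F)$ there exist $D \in \mathrm{Ob}(\mathbb{C}_{\mathit{fin}})$, $r \in \hom(D,F)$, $p \in \hom(A,D)$, $q \in \hom(B,D)$ with $r\cdot p = e$, $r \cdot q = f$, such that moreover for every $H \in \mathrm{Ob}(\mathbb{C})$ and $r' \in \hom(H,F)$, $p' \in \hom(A,H)$, $q' \in \hom(B,H)$ with $r'\cdot p' = e$, $r'\cdot q' = f$ there is $s \in \hom(D,H)$ with $r'\cdot s = r$, $s \cdot p = p'$, $s\cdot q = q'$. The automorphisms of $F$ are finitely separated if for all $f \neq g$ in $\mathrm{Aut}(F)$ there are $A \in \mathrm{Ob}(\mathbb{C}_{\mathit{fin}})$ and $e \in \hom(A,F)$ with $f\cdot e \neq g\cdot e$. $\tau_F$ is the topology on $\mathrm{Aut}(F)$ generated by the sets $N_F(e_1,e_2) = \{f \in \mathrm{Aut}(F) : f\cdot e_1 = e_2\}$, for $A \in \mathrm{Ob}(\mathbb{C}_{\mathit{fin}})$ and $e_1,e_2 \in \hom(A,F)$. A topological group $G$ is extremely amenable if every continuous action of $G$ on a compact Hausdorff space has a point fixed by all of $G$. A category $\mathbb{D}$ has the Ramsey property if for every integer $k \ge 2$ and all $A,B \in \mathrm{Ob}(\mathbb{D})$ there is $C \in \mathrm{Ob}(\mathbb{D})$ such that for every map $\chi : \hom(A,C) \to \{0,\dots,k-1\}$ there is $w \in \hom(B,C)$ with $|\chi(w\cdot\hom(A,B))| \le 1$, where $w \cdot X = \{w\cdot x : x \in X\}$. *)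

theory Defs
  imports "HOL-Analysis.Analysis"
begin

text \<open>A (locally small) category: objects Ob, hom-sets hom A B, composition cmp g f
  (g after f, written g.f in the paper), identities ident.\<close>

definition category ::
  "'o set \<Rightarrow> ('o \<Rightarrow> 'o \<Rightarrow> 'm set) \<Rightarrow> ('m \<Rightarrow> 'm \<Rightarrow> 'm) \<Rightarrow> ('o \<Rightarrow> 'm) \<Rightarrow> bool" where
  "category Ob hom cmp ident \<longleftrightarrow>
     (\<forall>A B f. f \<in> hom A B \<longrightarrow> A \<in> Ob \<and> B \<in> Ob) \<and>
     (\<forall>A B A' B' f. f \<in> hom A B \<and> f \<in> hom A' B' \<longrightarrow> A = A' \<and> B = B') \<and>
     (\<forall>A\<in>Ob. ident A \<in> hom A A) \<and>
     (\<forall>A B C f g. f \<in> hom A B \<and> g \<in> hom B C \<longrightarrow> cmp g f \<in> hom A C) \<and>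
     (\<forall>A B C D f g h. f \<in> hom A B \<and> g \<in> hom B C \<and> h \<in> hom C D \<longrightarrow>
        cmp h (cmp g f) = cmp (cmp h g) f) \<and>
     (\<forall>A B f. f \<in> hom A B \<longrightarrow> cmp (ident B) f = f \<and> cmp f (ident A) = f)"

definition monomorphism ::
  "'o set \<Rightarrow> ('o \<Rightarrow> 'o \<Rightarrow> 'm set) \<Rightarrow> ('m \<Rightarrow> 'm \<Rightarrow> 'm) \<Rightarrow> 'o \<Rightarrow> 'o \<Rightarrow> 'm \<Rightarrow> bool" where
  "monomorphism Ob hom cmp A B f \<longleftrightarrow> f \<in> hom A B \<and>
     (\<forall>X\<in>Ob. \<forall>g\<in>hom X A. \<forall>h\<in>hom X A. cmp f g = cmp f h \<longrightarrow> g = h)"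

text \<open>Conditions (C1)-(C5) for the full subcategory with object set Obfin
  (its hom-sets are those of the ambient category). (C2) is automatic in HOL.\<close>

definition C1 where
  "C1 Ob hom cmp \<longleftrightarrow> (\<forall>A\<in>Ob. \<forall>B\<in>Ob. \<forall>f\<in>hom A B. monomorphism Ob hom cmp A B f)"

definition C2 :: "'o set \<Rightarrow> bool" where
  "C2 Obfin \<longleftrightarrow> True"

definition C3 :: "'o set \<Rightarrow> ('o \<Rightarrow> 'o \<Rightarrow> 'm set) \<Rightarrow> bool" where
  "C3 Obfin hom \<longleftrightarrow> (\<forall>A\<in>Obfin. \<forall>B\<in>Obfin. finite (hom A B))"

definition C4 :: "'o set \<Rightarrow> 'o set \<Rightarrow> ('o \<Rightarrow> 'o \<Rightarrow> 'm set) \<Rightarrow> bool" where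
  "C4 Ob Obfin hom \<longleftrightarrow> (\<forall>F\<in>Ob. \<exists>A\<in>Obfin. hom A F \<noteq> {})"

definition C5 :: "'o set \<Rightarrow> ('o \<Rightarrow> 'o \<Rightarrow> 'm set) \<Rightarrow> bool" where
  "C5 Obfin hom \<longleftrightarrow> (\<forall>B\<in>Obfin. finite {A\<in>Obfin. hom A B \<noteq> {}})"

definition Aut ::
  "('o \<Rightarrow> 'o \<Rightarrow> 'm set) \<Rightarrow> ('m \<Rightarrow> 'm \<Rightarrow> 'm) \<Rightarrow> ('o \<Rightarrow> 'm) \<Rightarrow> 'o \<Rightarrow> 'm set" where
  "Aut hom cmp ident F =
     {f \<in> hom F F. \<exists>g\<in>hom F F. cmp g f = ident F \<and> cmp f g = ident F}"

definition homogeneous where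
  "homogeneous Obfin hom cmp ident F \<longleftrightarrow>
     (\<forall>A\<in>Obfin. \<forall>e1\<in>hom A F. \<forall>e2\<in>hom A F. \<exists>g\<in>Aut hom cmp ident F. cmp g e1 = e2)"

definition universal where
  "universal Obfin hom F \<longleftrightarrow> (\<forall>A\<in>Obfin. hom A F \<noteq> {})"

definition locally_finite where
  "locally_finite Ob Obfin hom cmp F \<longleftrightarrow>
     (\<forall>A\<in>Obfin. \<forall>B\<in>Obfin. \<forall>e\<in>hom A F. \<forall>f\<in>hom B F.
       \<exists>D\<in>Obfin. \<exists>r\<in>hom D F. \<exists>p\<in>hom A D. \<exists>q\<in>hom B D.
         cmp r p = e \<and> cmp r q = f \<and>
         (\<forall>H\<in>Ob. \<forall>r'\<in>hom H F. \<forall>p'\<in>hom A H. \<forall>q'\<in>hom B H.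
            cmp r' p' = e \<and> cmp r' q' = f \<longrightarrow>
            (\<exists>s\<in>hom D H. cmp r' s = r \<and> cmp s p = p' \<and> cmp s q = q')))"

definition finitely_separated where
  "finitely_separated Obfin hom cmp ident F \<longleftrightarrow>
     (\<forall>f\<in>Aut hom cmp ident F. \<forall>g\<in>Aut hom cmp ident F. f \<noteq> g \<longrightarrow>
        (\<exists>A\<in>Obfin. \<exists>e\<in>hom A F. cmp f e \<noteq> cmp g e))"

definition N_F where
  "N_F hom cmp ident F e1 e2 = {f \<in> Aut hom cmp ident F. cmp f e1 = e2}"

definition tau_F where
  "tau_F Obfin hom cmp ident F = topology_generated_by
     {N_F hom cmp ident F e1 e2 | A e1 e2. A \<in> Obfin \<and> e1 \<in> hom A F \<and> e2 \<in> hom A F}"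

text \<open>Extreme amenability of a topological group (G, gmult, gone) with topology T, tested
  on all (nonempty) compact Hausdorff spaces whose points are of type 'x.\<close>
definition extremely_amenable ::
  "'x itself \<Rightarrow> 'g set \<Rightarrow> ('g \<Rightarrow> 'g \<Rightarrow> 'g) \<Rightarrow> 'g \<Rightarrow> 'g topology \<Rightarrow> bool" where
  "extremely_amenable _ G gmult gone T \<longleftrightarrow>
     (\<forall>(X :: 'x topology) (act :: 'g \<Rightarrow> 'x \<Rightarrow> 'x).
        compact_space X \<and> Hausdorff_space X \<and> topspace X \<noteq> {} \<and>
        (\<forall>g\<in>G. \<forall>x\<in>topspace X. act g x \<in> topspace X) \<and>
        (\<forall>x\<in>topspace X. act gone x = x) \<and>
        (\<forall>g\<in>G. \<forall>h\<in>G. \<forall>x\<in>topspace X. act (gmult g h) x = act g (act h x)) \<and>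
        continuous_map (prod_topology T X) X (\<lambda>(g, x). act g x)
        \<longrightarrow> (\<exists>x\<in>topspace X. \<forall>g\<in>G. act g x = x))"

definition Ramsey_property ::
  "'o set \<Rightarrow> ('o \<Rightarrow> 'o \<Rightarrow> 'm set) \<Rightarrow> ('m \<Rightarrow> 'm \<Rightarrow> 'm) \<Rightarrow> bool" where
  "Ramsey_property Obfin hom cmp \<longleftrightarrow>
     (\<forall>k::nat. k \<ge> 2 \<longrightarrow> (\<forall>A\<in>Obfin. \<forall>B\<in>Obfin. \<exists>C\<in>Obfin.
        \<forall>col \<in> (hom A C \<rightarrow> {..<k}). \<exists>w\<in>hom B C.
          card (col ` ((\<lambda>x. cmp w x) ` hom A B)) \<le> 1))"

end

theory Submission
  imports Defs
begin


lemma EA_transfer: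
  fixes f :: "'x \<Rightarrow> 'y" and G :: "'a set"
  assumes inj: "inj f" and EA: "extremely_amenable TYPE('y) G m e T"
  shows "extremely_amenable TYPE('x) G m e T"
  unfolding extremely_amenable_def
proof (intro allI impI)
  fix X :: "'x topology" and act :: "'a \<Rightarrow> 'x \<Rightarrow> 'x"
  assume H: "compact_space X \<and> Hausdorff_space X \<and> topspace X \<noteq> {} \<and>
        (\<forall>g\<in>G. \<forall>x\<in>topspace X. act g x \<in> topspace X) \<and>
        (\<forall>x\<in>topspace X. act e x = x) \<and>
        (\<forall>g\<in>G. \<forall>h\<in>G. \<forall>x\<in>topspace X. act (m g h) x = act g (act h x)) \<and>
        continuous_map (prod_topology T X) X (\<lambda>(g, x). act g x)"
  define P where "P = (\<lambda>U. \<exists>V. openin X V \<and> U = f ` V)"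
  have isto: "istopology P"
    unfolding istopology_def P_def
  proof (intro conjI allI impI ballI)
    fix S S' assume "\<exists>V. openin X V \<and> S = f ` V" "\<exists>V. openin X V \<and> S' = f ` V"
    then obtain V V' where "openin X V" "S = f ` V" "openin X V'" "S' = f ` V'" by blast
    then show "\<exists>V. openin X V \<and> S \<inter> S' = f ` V"
      by (intro exI[of _ "V \<inter> V'"]) (auto simp: image_Int[OF inj])
  next
    fix K assume K: "\<forall>S\<in>K. \<exists>V. openin X V \<and> S = f ` V"
    show "\<exists>V. openin X V \<and> \<Union>K = f ` V"
    proof (intro exI[of _ "\<Union>{V. openin X V \<and> f ` V \<in> K}"] conjI)
      show "openin X (\<Union>{V. openin X V \<and> f ` V \<in> K})" by auto
      show "\<Union>K = f ` \<Union>{V. openin X V \<and> f ` V \<in> K}"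
      proof
        show "\<Union>K \<subseteq> f ` \<Union>{V. openin X V \<and> f ` V \<in> K}"
        proof
          fix y assume "y \<in> \<Union>K"
          then obtain S where "S \<in> K" "y \<in> S" by blast
          with K obtain V where "openin X V" "S = f ` V" by blast
          with \<open>S \<in> K\<close> \<open>y \<in> S\<close> show "y \<in> f ` \<Union>{V. openin X V \<and> f ` V \<in> K}" by blast
        qed
      qed blast
    qed
  qed
  define X' where "X' = topology P"
  have op: "openin X' U \<longleftrightarrow> (\<exists>V. openin X V \<and> U = f ` V)" for U
    using isto by (simp add: X'_def P_def)
  have ts: "topspace X' = f ` topspace X"
  proof -
    have "topspace X' = \<Union>{U. openin X' U}" by (simp add: topspace_def)
    also have "\<dots> = f ` topspace X" unfolding op
      by (auto simp: topspace_def)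
    finally show ?thesis .
  qed
  have hm: "homeomorphic_map X X' f"
    unfolding homeomorphic_map_def quotient_map_def
  proof (intro conjI allI impI)
    show "f ` topspace X = topspace X'" using ts by simp
    show "inj_on f (topspace X)" using inj by (simp add: inj_on_def inj_def)
    fix U assume U: "U \<subseteq> topspace X'"
    have pre: "f ` {x \<in> topspace X. f x \<in> U} = U" using U ts by auto
    show "openin X {x \<in> topspace X. f x \<in> U} = openin X' U"
    proof
      assume "openin X {x \<in> topspace X. f x \<in> U}"
      then show "openin X' U" unfolding op using pre by metis
    next
      assume "openin X' U"
      then obtain V where V: "openin X V" "U = f ` V" unfolding op by blast
      have "{x \<in> topspace X. f x \<in> U} = V"
        using V openin_subset[OF V(1)] inj by (auto simp: inj_def)
      then show "openin X {x \<in> topspace X. f x \<in> U}" using V by simp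
    qed
  qed
  then obtain h where hh: "homeomorphic_maps X X' f h" by (auto simp: homeomorphic_map_maps)
  then have fc: "continuous_map X X' f" and hc: "continuous_map X' X h"
    and hf: "\<And>x. x \<in> topspace X \<Longrightarrow> h (f x) = x" and fh: "\<And>y. y \<in> topspace X' \<Longrightarrow> f (h y) = y"
    by (auto simp: homeomorphic_maps_def)
  define act' where "act' = (\<lambda>g y. f (act g (h y)))"
  have "\<exists>y\<in>topspace X'. \<forall>g\<in>G. act' g y = y"
  proof (rule EA[unfolded extremely_amenable_def, rule_format], intro conjI)
    show "compact_space X'" using H homeomorphic_compact_space homeomorphic_map_imp_homeomorphic_space[OF hm] by blast
    show "Hausdorff_space X'" using H homeomorphic_Hausdorff_space homeomorphic_map_imp_homeomorphic_space[OF hm] by blast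
    show "topspace X' \<noteq> {}" using H ts by simp
    show "\<forall>g\<in>G. \<forall>x\<in>topspace X'. act' g x \<in> topspace X'"
      using H ts hf by (auto simp: act'_def)
    show "\<forall>x\<in>topspace X'. act' e x = x"
      using H ts hf by (auto simp: act'_def)
    show "\<forall>g\<in>G. \<forall>h'\<in>G. \<forall>x\<in>topspace X'. act' (m g h') x = act' g (act' h' x)"
      using H ts hf by (auto simp: act'_def)
    have c1: "continuous_map (prod_topology T X') (prod_topology T X) (\<lambda>(g, y). (g, h y))"
    proof -
      have "continuous_map (prod_topology T X') (prod_topology T X) (\<lambda>z. (fst z, (h \<circ> snd) z))"
        by (intro continuous_map_pairedI continuous_map_fst continuous_map_compose[OF continuous_map_snd hc])
      then show ?thesis by (simp add: case_prod_beta' o_def)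
    qed
    have "continuous_map (prod_topology T X') X' (f \<circ> (\<lambda>(g, x). act g x) \<circ> (\<lambda>(g, y). (g, h y)))"
      by (intro continuous_map_compose[OF c1] continuous_map_compose[OF _ fc] H[THEN conjunct2, THEN conjunct2, THEN conjunct2, THEN conjunct2, THEN conjunct2, THEN conjunct2])
    then show "continuous_map (prod_topology T X') X' (\<lambda>(g, x). act' g x)"
      by (simp add: act'_def o_def case_prod_beta')
  qed
  then obtain y where y: "y \<in> topspace X'" "\<forall>g\<in>G. act' g y = y" by blast
  then obtain x where x: "x \<in> topspace X" "y = f x" using ts by auto
  have "\<forall>g\<in>G. act g x = x"
    using y x hf inj by (auto simp: act'_def inj_def)
  then show "\<exists>x\<in>topspace X. \<forall>g\<in>G. act g x = x" using x by blast
qed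




locale kpt =
  fixes Ob Obfin :: "'o set"
    and hom :: "'o \<Rightarrow> 'o \<Rightarrow> 'm set"
    and cmp :: "'m \<Rightarrow> 'm \<Rightarrow> 'm"
    and ident :: "'o \<Rightarrow> 'm"
    and F :: 'o
  assumes cat: "category Ob hom cmp ident"
    and sub: "Obfin \<subseteq> Ob"
    and c1: "C1 Ob hom cmp" and c3: "C3 Obfin hom" and c4: "C4 Ob Obfin hom"
    and FOb: "F \<in> Ob"
    and homog: "homogeneous Obfin hom cmp ident F"
    and lf: "locally_finite Ob Obfin hom cmp F"
    and univ: "universal Obfin hom F"
begin

abbreviation "G \<equiv> Aut hom cmp ident F"
abbreviation "T \<equiv> tau_F Obfin hom cmp ident F"

lemma hom_ob: "f \<in> hom A B \<Longrightarrow> A \<in> Ob \<and> B \<in> Ob"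
  using cat unfolding category_def by (elim conjE) meson
lemma hom_uniq: "f \<in> hom A B \<Longrightarrow> f \<in> hom A' B' \<Longrightarrow> A = A' \<and> B = B'"
  using cat unfolding category_def by (elim conjE) meson
lemma ident_hom: "A \<in> Ob \<Longrightarrow> ident A \<in> hom A A"
  using cat unfolding category_def by (elim conjE) meson
lemma cmp_hom: "f \<in> hom A B \<Longrightarrow> g \<in> hom B C \<Longrightarrow> cmp g f \<in> hom A C"
  using cat unfolding category_def by (elim conjE) meson
lemma assoc: "f \<in> hom A B \<Longrightarrow> g \<in> hom B C \<Longrightarrow> h \<in> hom C D \<Longrightarrow> cmp h (cmp g f) = cmp (cmp h g) f"
  using cat unfolding category_def by (elim conjE) meson
lemma idl: "f \<in> hom A B \<Longrightarrow> cmp (ident B) f = f"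
  using cat unfolding category_def by (elim conjE) meson
lemma idr: "f \<in> hom A B \<Longrightarrow> cmp f (ident A) = f"
  using cat unfolding category_def by (elim conjE) meson
lemma mono: "f \<in> hom B C \<Longrightarrow> g \<in> hom A B \<Longrightarrow> h \<in> hom A B \<Longrightarrow> cmp f g = cmp f h \<Longrightarrow> g = h"
  using c1 hom_ob unfolding C1_def monomorphism_def by metis

lemma Aut_hom: "g \<in> G \<Longrightarrow> g \<in> hom F F"
  by (simp add: Aut_def)
lemma ident_Aut: "ident F \<in> G"
  using ident_hom[OF FOb] idl[OF ident_hom[OF FOb]] by (auto simp: Aut_def)

definition ginv where "ginv g = (SOME h. h \<in> hom F F \<and> cmp h g = ident F \<and> cmp g h = ident F)"

lemma ginv: assumes "g \<in> G"
  shows "ginv g \<in> hom F F" "cmp (ginv g) g = ident F" "cmp g (ginv g) = ident F"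
proof -
  have "\<exists>h. h \<in> hom F F \<and> cmp h g = ident F \<and> cmp g h = ident F" using assms by (auto simp: Aut_def)
  then have "ginv g \<in> hom F F \<and> cmp (ginv g) g = ident F \<and> cmp g (ginv g) = ident F"
    unfolding ginv_def by (rule someI_ex)
  then show "ginv g \<in> hom F F" "cmp (ginv g) g = ident F" "cmp g (ginv g) = ident F" by auto
qed

lemma ginv_Aut: "g \<in> G \<Longrightarrow> ginv g \<in> G"
  using ginv[of g] Aut_hom[of g] by (auto simp: Aut_def)

lemma cmp_Aut: assumes "g \<in> G" "h \<in> G" shows "cmp g h \<in> G"
proof -
  have gh: "g \<in> hom F F" "h \<in> hom F F" "ginv g \<in> hom F F" "ginv h \<in> hom F F"
    using assms ginv Aut_hom by auto
  have "cmp (cmp (ginv h) (ginv g)) (cmp g h) = cmp (ginv h) (cmp (ginv g) (cmp g h))"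
    using assoc[OF cmp_hom[OF gh(2) gh(1)] gh(3) gh(4)] by simp
  also have "cmp (ginv g) (cmp g h) = cmp (cmp (ginv g) g) h" using assoc[OF gh(2) gh(1) gh(3)] .
  also have "\<dots> = h" using ginv(2)[OF assms(1)] idl[OF gh(2)] by simp
  finally have 1: "cmp (cmp (ginv h) (ginv g)) (cmp g h) = ident F" using ginv(2)[OF assms(2)] by simp
  have "cmp (cmp g h) (cmp (ginv h) (ginv g)) = cmp g (cmp h (cmp (ginv h) (ginv g)))"
    using assoc[OF cmp_hom[OF gh(3) gh(4)] gh(2) gh(1)] by simp
  also have "cmp h (cmp (ginv h) (ginv g)) = cmp (cmp h (ginv h)) (ginv g)" using assoc[OF gh(3) gh(4) gh(2)] .
  also have "\<dots> = ginv g" using ginv(3)[OF assms(2)] idl[OF gh(3)] by simp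
  finally have 2: "cmp (cmp g h) (cmp (ginv h) (ginv g)) = ident F" using ginv(3)[OF assms(1)] by simp
  from 1 2 show ?thesis using gh cmp_hom by (auto simp: Aut_def)
qed

lemma inv_unique: assumes "g \<in> G" "k \<in> hom F F" "cmp k g = ident F" shows "k = ginv g"
proof -
  have "k = cmp k (cmp g (ginv g))" using ginv[OF assms(1)] idr[OF assms(2)] by simp
  also have "\<dots> = cmp (cmp k g) (ginv g)" using assoc[OF ginv(1)[OF assms(1)] Aut_hom[OF assms(1)] assms(2)] .
  also have "\<dots> = ginv g" using assms(3) idl ginv[OF assms(1)] by simp
  finally show ?thesis .
qed

lemma ginv_ginv: "g \<in> G \<Longrightarrow> ginv (ginv g) = g"
  using inv_unique[OF ginv_Aut Aut_hom ginv(3)] by simp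

lemma ginv_cmp: assumes "g \<in> G" "h \<in> G" shows "ginv (cmp g h) = cmp (ginv h) (ginv g)"
proof -
  have gh: "g \<in> hom F F" "h \<in> hom F F" "ginv g \<in> hom F F" "ginv h \<in> hom F F"
    using assms ginv Aut_hom by auto
  have "cmp (cmp (ginv h) (ginv g)) (cmp g h) = cmp (ginv h) (cmp (ginv g) (cmp g h))"
    using assoc[OF cmp_hom[OF gh(2) gh(1)] gh(3) gh(4)] by simp
  also have "cmp (ginv g) (cmp g h) = cmp (cmp (ginv g) g) h" using assoc[OF gh(2) gh(1) gh(3)] .
  also have "\<dots> = h" using ginv(2)[OF assms(1)] idl[OF gh(2)] by simp
  finally have 1: "cmp (cmp (ginv h) (ginv g)) (cmp g h) = ident F" using ginv(2)[OF assms(2)] by simp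
  show ?thesis using inv_unique[OF cmp_Aut[OF assms] cmp_hom[OF gh(3) gh(4)] 1] by simp
qed

lemma ginv_cancel: assumes "g \<in> G" "a \<in> hom A F" shows "cmp (ginv g) (cmp g a) = a" "cmp g (cmp (ginv g) a) = a"
  using assoc[OF assms(2) Aut_hom[OF assms(1)] ginv(1)[OF assms(1)]]
    assoc[OF assms(2) ginv(1)[OF assms(1)] Aut_hom[OF assms(1)]] ginv[OF assms(1)] idl[OF assms(2)]
  by auto

lemma amalg_finite:
  assumes "finite S" "\<forall>s\<in>S. \<exists>X\<in>Obfin. s \<in> hom X F"
  shows "\<exists>D\<in>Obfin. \<exists>r\<in>hom D F. \<forall>s\<in>S. \<exists>X\<in>Obfin. \<exists>p\<in>hom X D. s = cmp r p"
  using assms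
proof (induction S rule: finite_induct)
  case empty
  then show ?case using c4 FOb unfolding C4_def by blast
next
  case (insert s S)
  then obtain D r where D: "D \<in> Obfin" "r \<in> hom D F" "\<forall>s\<in>S. \<exists>X\<in>Obfin. \<exists>p\<in>hom X D. s = cmp r p"
    by auto
  from insert obtain X where X: "X \<in> Obfin" "s \<in> hom X F" by auto
  from lf[unfolded locally_finite_def, rule_format, OF D(1) X(1) D(2) X(2)]
  obtain D' r' p q where D': "D' \<in> Obfin" "r' \<in> hom D' F" "p \<in> hom D D'" "q \<in> hom X D'"
    "cmp r' p = r" "cmp r' q = s" by blast
  have "\<forall>s'\<in>insert s S. \<exists>X\<in>Obfin. \<exists>p\<in>hom X D'. s' = cmp r' p"
  proof
    fix s' assume "s' \<in> insert s S"
    then consider "s' = s" | "s' \<in> S" by blast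
    then show "\<exists>X\<in>Obfin. \<exists>p\<in>hom X D'. s' = cmp r' p"
    proof cases
      case 1 then show ?thesis using X D' by metis
    next
      case 2
      then obtain Y p' where "Y \<in> Obfin" "p' \<in> hom Y D" "s' = cmp r p'" using D by blast
      then show ?thesis using D' assoc[of p' Y D p D' r' F] cmp_hom[of p' Y D p D'] by metis
    qed
  qed
  then show ?case using D' by blast
qed

lemma exists_hom: "\<exists>A\<in>Obfin. \<exists>e. e \<in> hom A F"
  using c4 FOb unfolding C4_def by blast

lemma topspace_T: "topspace T = G"
proof -
  obtain A e where Ae: "A \<in> Obfin" "e \<in> hom A F" using exists_hom by blast
  have "G \<subseteq> \<Union>{N_F hom cmp ident F e1 e2 | A e1 e2. A \<in> Obfin \<and> e1 \<in> hom A F \<and> e2 \<in> hom A F}"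
  proof
    fix g assume g: "g \<in> G"
    then have "g \<in> N_F hom cmp ident F e (cmp g e)" by (simp add: N_F_def)
    moreover have "cmp g e \<in> hom A F" using cmp_hom Ae Aut_hom g by blast
    ultimately show "g \<in> \<Union>{N_F hom cmp ident F e1 e2 | A e1 e2. A \<in> Obfin \<and> e1 \<in> hom A F \<and> e2 \<in> hom A F}"
      using Ae by blast
  qed
  moreover have "\<Union>{N_F hom cmp ident F e1 e2 | A e1 e2. A \<in> Obfin \<and> e1 \<in> hom A F \<and> e2 \<in> hom A F} \<subseteq> G"
    by (auto simp: N_F_def)
  ultimately show ?thesis by (simp add: tau_F_def)
qed

lemma N_open: "A \<in> Obfin \<Longrightarrow> e1 \<in> hom A F \<Longrightarrow> e2 \<in> hom A F \<Longrightarrow> openin T (N_F hom cmp ident F e1 e2)"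
  unfolding tau_F_def by (rule topology_generated_by_Basis) blast

lemma nbhd_gen:
  assumes "generate_topology_on {N_F hom cmp ident F e1 e2 | A e1 e2. A \<in> Obfin \<and> e1 \<in> hom A F \<and> e2 \<in> hom A F} U"
  shows "\<forall>f\<in>U \<inter> G. \<exists>A\<in>Obfin. \<exists>e\<in>hom A F. {g\<in>G. cmp g e = cmp f e} \<subseteq> U"
  using assms
proof (induction rule: generate_topology_on.induct)
  case Empty
  then show ?case by simp
next
  case (Int a b)
  show ?case
  proof
    fix f assume f: "f \<in> a \<inter> b \<inter> G"
    then obtain A1 e1 A2 e2 where E: "A1 \<in> Obfin" "e1 \<in> hom A1 F" "{g\<in>G. cmp g e1 = cmp f e1} \<subseteq> a"
      "A2 \<in> Obfin" "e2 \<in> hom A2 F" "{g\<in>G. cmp g e2 = cmp f e2} \<subseteq> b"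
      using Int.IH by blast
    from lf[unfolded locally_finite_def, rule_format, OF E(1) E(4) E(2) E(5)]
    obtain D r p q where D: "D \<in> Obfin" "r \<in> hom D F" "p \<in> hom A1 D" "q \<in> hom A2 D"
      "cmp r p = e1" "cmp r q = e2" by blast
    have "{g\<in>G. cmp g r = cmp f r} \<subseteq> a \<inter> b"
    proof
      fix g assume g: "g \<in> {g\<in>G. cmp g r = cmp f r}"
      have "cmp g e1 = cmp f e1" "cmp g e2 = cmp f e2"
        using g f D assoc[of p A1 D r F] assoc[of q A2 D r F] assoc[of _ _ D r F g F] assoc[of _ _ D r F f F] Aut_hom by auto
      then show "g \<in> a \<inter> b" using E g by blast
    qed
    then show "\<exists>A\<in>Obfin. \<exists>e\<in>hom A F. {g\<in>G. cmp g e = cmp f e} \<subseteq> a \<inter> b" using D by blast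
  qed
next
  case (UN K)
  then show ?case by blast
next
  case (Basis s)
  show ?case
  proof
    fix f assume f: "f \<in> s \<inter> G"
    from Basis obtain A e1 e2 where s: "s = N_F hom cmp ident F e1 e2" "A \<in> Obfin" "e1 \<in> hom A F" "e2 \<in> hom A F" by blast
    then have "{g\<in>G. cmp g e1 = cmp f e1} \<subseteq> s" using f by (auto simp: N_F_def)
    then show "\<exists>A\<in>Obfin. \<exists>e\<in>hom A F. {g\<in>G. cmp g e = cmp f e} \<subseteq> s" using s by blast
  qed
qed

lemma nbhd:
  assumes "openin T U" "f \<in> U"
  shows "\<exists>A\<in>Obfin. \<exists>e\<in>hom A F. {g\<in>G. cmp g e = cmp f e} \<subseteq> U"
proof -
  have "f \<in> G" using assms openin_subset topspace_T by blast
  moreover have "generate_topology_on {N_F hom cmp ident F e1 e2 | A e1 e2. A \<in> Obfin \<and> e1 \<in> hom A F \<and> e2 \<in> hom A F} U"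
    using assms(1) unfolding tau_F_def by (rule openin_topology_generated_by)
  ultimately show ?thesis using nbhd_gen assms(2) by blast
qed

lemma ramsey_F:
  assumes R: "Ramsey_property Obfin hom cmp" and A: "A \<in> Obfin" and S: "finite S" "S \<subseteq> hom A F"
    and chi: "chi \<in> hom A F \<rightarrow> {..<(k::nat)}"
  shows "\<exists>g\<in>G. \<forall>a\<in>S. \<forall>b\<in>S. chi (cmp g a) = chi (cmp g b)"
proof -
  obtain D u where D: "D \<in> Obfin" "u \<in> hom D F" "\<forall>s\<in>S. \<exists>X\<in>Obfin. \<exists>p\<in>hom X D. s = cmp u p"
    using amalg_finite[OF S(1)] S(2) A by blast
  have Sp: "\<forall>s\<in>S. \<exists>p\<in>hom A D. s = cmp u p"
  proof
    fix s assume s: "s \<in> S"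
    then obtain X p where "X \<in> Obfin" "p \<in> hom X D" "s = cmp u p" using D by blast
    moreover have "s \<in> hom X F" using calculation cmp_hom D by blast
    ultimately show "\<exists>p\<in>hom A D. s = cmp u p" using hom_uniq s S(2) by blast
  qed
  define k' where "k' = max k (2::nat)"
  obtain C where C: "C \<in> Obfin" "\<forall>col \<in> (hom A C \<rightarrow> {..<k'}). \<exists>w\<in>hom D C.
          card (col ` ((\<lambda>x. cmp w x) ` hom A D)) \<le> 1"
    using R[unfolded Ramsey_property_def, rule_format, of k' A D] A D(1) by (auto simp: k'_def)
  obtain v where v: "v \<in> hom C F" using univ C(1) unfolding universal_def by blast
  have col: "(\<lambda>x. chi (cmp v x)) \<in> hom A C \<rightarrow> {..<k'}"
  proof
    fix x assume "x \<in> hom A C"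
    then have "cmp v x \<in> hom A F" using cmp_hom v by blast
    then have "chi (cmp v x) < k" using chi by blast
    then show "chi (cmp v x) \<in> {..<k'}" by (simp add: k'_def)
  qed
  obtain w where w: "w \<in> hom D C" "card ((\<lambda>x. chi (cmp v x)) ` ((\<lambda>x. cmp w x) ` hom A D)) \<le> 1"
    using C(2) col by blast
  have fin: "finite ((\<lambda>x. chi (cmp v x)) ` ((\<lambda>x. cmp w x) ` hom A D))"
    using c3 A D(1) unfolding C3_def by blast
  have w': "cmp v w \<in> hom D F" using w v cmp_hom by blast
  obtain g where g: "g \<in> G" "cmp g u = cmp v w"
    using homog[unfolded homogeneous_def, rule_format, OF D(1) D(2) w'] by blast
  have "chi (cmp g a) = chi (cmp g b)" if a: "a \<in> S" and b: "b \<in> S" for a b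
  proof -
    obtain pa pb where p: "pa \<in> hom A D" "a = cmp u pa" "pb \<in> hom A D" "b = cmp u pb" using Sp a b by blast
    have "cmp g (cmp u pa) = cmp v (cmp w pa)" "cmp g (cmp u pb) = cmp v (cmp w pb)"
      using assoc[OF p(1) w(1) v] assoc[OF p(3) w(1) v] assoc[OF p(1) D(2) Aut_hom[OF g(1)]] assoc[OF p(3) D(2) Aut_hom[OF g(1)]] g(2) by auto
    moreover have "chi (cmp v (cmp w pa)) \<in> (\<lambda>x. chi (cmp v x)) ` ((\<lambda>x. cmp w x) ` hom A D)"
      "chi (cmp v (cmp w pb)) \<in> (\<lambda>x. chi (cmp v x)) ` ((\<lambda>x. cmp w x) ` hom A D)" using p by blast+
    ultimately show ?thesis using p w(2) fin card_le_Suc0_iff_eq by (metis One_nat_def)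
  qed
  then show ?thesis using g by blast
qed

end



context kpt begin

lemma core:
  fixes X :: "'x topology" and act :: "'m \<Rightarrow> 'x \<Rightarrow> 'x" and PP :: "'x set set"
  assumes R: "Ramsey_property Obfin hom cmp"
    and ne: "topspace X \<noteq> {}" and cX: "compact_space X"
    and clo: "\<forall>g\<in>G. \<forall>x\<in>topspace X. act g x \<in> topspace X"
    and aid: "\<forall>x\<in>topspace X. act (ident F) x = x"
    and acomp: "\<forall>g\<in>G. \<forall>h\<in>G. \<forall>x\<in>topspace X. act (cmp g h) x = act g (act h x)"
    and cont: "continuous_map (prod_topology T X) X (\<lambda>(g, x). act g x)"
    and Pcov: "\<forall>y\<in>topspace X. \<exists>P\<in>PP. y \<in> P"
    and Popen: "\<forall>P\<in>PP. openin X P"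
    and Gam: "finite Gam" "Gam \<subseteq> G"
  shows "\<exists>x\<in>topspace X. \<exists>P\<in>PP. x \<in> P \<and> (\<forall>g\<in>Gam. act g x \<in> P)"
proof -
  have loc: "\<exists>P W A e. P \<in> PP \<and> A \<in> Obfin \<and> e \<in> hom A F \<and> openin X W \<and> y \<in> W \<and>
      (\<forall>h\<in>G. cmp h e = e \<longrightarrow> (\<forall>z\<in>W. act h z \<in> P))" if y: "y \<in> topspace X" for y
  proof -
    obtain P where P: "P \<in> PP" "y \<in> P" using Pcov y by blast
    define Opre where "Opre = {z \<in> topspace (prod_topology T X). (\<lambda>(g, x). act g x) z \<in> P}"
    have op: "openin (prod_topology T X) Opre"
      unfolding Opre_def using openin_continuous_map_preimage[OF cont] Popen P by blast
    have mem: "(ident F, y) \<in> Opre"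
      using ident_Aut topspace_T y aid P by (auto simp: Opre_def)
    have "\<exists>U V. openin T U \<and> openin X V \<and> ident F \<in> U \<and> y \<in> V \<and> U \<times> V \<subseteq> Opre"
      using openin_prod_topology_alt[THEN iffD1, OF op, rule_format, OF mem] .
    then obtain U V where UV: "openin T U" "openin X V" "ident F \<in> U" "y \<in> V" "U \<times> V \<subseteq> Opre"
      by blast
    obtain A e where Ae: "A \<in> Obfin" "e \<in> hom A F" "{g\<in>G. cmp g e = cmp (ident F) e} \<subseteq> U"
      using nbhd[OF UV(1) UV(3)] by blast
    have "\<forall>h\<in>G. cmp h e = e \<longrightarrow> (\<forall>z\<in>V. act h z \<in> P)"
    proof (intro ballI impI)
      fix h z assume h: "h \<in> G" "cmp h e = e" and z: "z \<in> V"
      then have "h \<in> U" using Ae idl by auto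
      then have "(h, z) \<in> Opre" using UV z by blast
      then show "act h z \<in> P" by (simp add: Opre_def)
    qed
    then show ?thesis using P Ae UV by blast
  qed
  obtain Pf Wf Af ef where fs: "\<forall>y\<in>topspace X. Pf y \<in> PP \<and> Af y \<in> Obfin \<and> ef y \<in> hom (Af y) F \<and>
      openin X (Wf y) \<and> y \<in> Wf y \<and> (\<forall>h\<in>G. cmp h (ef y) = ef y \<longrightarrow> (\<forall>z\<in>Wf y. act h z \<in> Pf y))"
  proof -
    have "\<forall>y\<in>topspace X. \<exists>q. fst q \<in> PP \<and> fst (snd (snd q)) \<in> Obfin \<and> snd (snd (snd q)) \<in> hom (fst (snd (snd q))) F \<and>
      openin X (fst (snd q)) \<and> y \<in> fst (snd q) \<and> (\<forall>h\<in>G. cmp h (snd (snd (snd q))) = snd (snd (snd q)) \<longrightarrow> (\<forall>z\<in>fst (snd q). act h z \<in> fst q))"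
    proof
      fix y assume "y \<in> topspace X"
      from loc[OF this] obtain P W A e where "P \<in> PP \<and> A \<in> Obfin \<and> e \<in> hom A F \<and> openin X W \<and> y \<in> W \<and>
      (\<forall>h\<in>G. cmp h e = e \<longrightarrow> (\<forall>z\<in>W. act h z \<in> P))" by blast
      then show "\<exists>q. fst q \<in> PP \<and> fst (snd (snd q)) \<in> Obfin \<and> snd (snd (snd q)) \<in> hom (fst (snd (snd q))) F \<and>
      openin X (fst (snd q)) \<and> y \<in> fst (snd q) \<and> (\<forall>h\<in>G. cmp h (snd (snd (snd q))) = snd (snd (snd q)) \<longrightarrow> (\<forall>z\<in>fst (snd q). act h z \<in> fst q))"
        by (intro exI[of _ "(P, W, A, e)"]) simp
    qed
    then obtain q where "\<forall>y\<in>topspace X. fst (q y) \<in> PP \<and> fst (snd (snd (q y))) \<in> Obfin \<and> snd (snd (snd (q y))) \<in> hom (fst (snd (snd (q y)))) F \<and>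
      openin X (fst (snd (q y))) \<and> y \<in> fst (snd (q y)) \<and> (\<forall>h\<in>G. cmp h (snd (snd (snd (q y)))) = snd (snd (snd (q y))) \<longrightarrow> (\<forall>z\<in>fst (snd (q y)). act h z \<in> fst (q y)))"
      by (rule bchoice[THEN exE]) blast
    then show ?thesis using that[where Pf="\<lambda>y. fst (q y)" and Wf="\<lambda>y. fst (snd (q y))" and Af="\<lambda>y. fst (snd (snd (q y)))" and ef="\<lambda>y. snd (snd (snd (q y)))"] by blast
  qed
  have "\<exists>\<F>. finite \<F> \<and> \<F> \<subseteq> Wf ` topspace X \<and> topspace X \<subseteq> \<Union>\<F>"
    using cX unfolding compact_space_alt
    by (rule allE[where x="Wf ` topspace X"]) (use fs in blast)
  then obtain FF where FF: "finite FF" "FF \<subseteq> Wf ` topspace X" "topspace X \<subseteq> \<Union>FF" by blast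
  obtain Y1 where Y1: "Y1 \<subseteq> topspace X" "finite Y1" "FF = Wf ` Y1"
    using finite_subset_image[OF FF(1) FF(2)] by blast
  have cov: "\<forall>z\<in>topspace X. \<exists>y\<in>Y1. z \<in> Wf y" using FF Y1 by blast
  obtain D r where D: "D \<in> Obfin" "r \<in> hom D F" "\<forall>s\<in>ef ` Y1. \<exists>X\<in>Obfin. \<exists>p\<in>hom X D. s = cmp r p"
    using amalg_finite[of "ef ` Y1"] Y1 fs by blast
  have key: "\<forall>y\<in>Y1. \<forall>z\<in>Wf y. act h z \<in> Pf y" if h: "h \<in> G" "cmp h r = r" for h
  proof (intro ballI)
    fix y z assume y: "y \<in> Y1" and z: "z \<in> Wf y"
    obtain Z p where p: "Z \<in> Obfin" "p \<in> hom Z D" "ef y = cmp r p" using D y by blast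
    have "cmp h (ef y) = cmp (cmp h r) p" using assoc[OF p(2) D(2) Aut_hom[OF h(1)]] p by simp
    then have "cmp h (ef y) = ef y" using h p by simp
    have "y \<in> topspace X" using y Y1 by blast
    then have "\<forall>h\<in>G. cmp h (ef y) = ef y \<longrightarrow> (\<forall>z\<in>Wf y. act h z \<in> Pf y)" using fs by blast
    then show "act h z \<in> Pf y" using h z \<open>cmp h (ef y) = ef y\<close> by blast
  qed
  obtain x0 where x0: "x0 \<in> topspace X" using ne by blast
  define n where "n = card Y1"
  obtain nu where nu: "bij_betw nu {0..<n} Y1" using ex_bij_betw_nat_finite[OF Y1(2)] n_def by blast
  define rep where "rep a = (SOME g. g \<in> G \<and> cmp g r = a)" for a
  have rep: "rep a \<in> G \<and> cmp (rep a) r = a" if a: "a \<in> hom D F" for a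
  proof -
    have "\<exists>g. g \<in> G \<and> cmp g r = a"
      using homog[unfolded homogeneous_def, rule_format, OF D(1) D(2) a] by blast
    then show ?thesis unfolding rep_def by (rule someI_ex)
  qed
  define chi where "chi a = (SOME i. i < n \<and> act (ginv (rep a)) x0 \<in> Wf (nu i))" for a
  have chi: "chi a < n \<and> act (ginv (rep a)) x0 \<in> Wf (nu (chi a))" if a: "a \<in> hom D F" for a
  proof -
    have "act (ginv (rep a)) x0 \<in> topspace X" using clo ginv_Aut rep a x0 by blast
    then obtain y where y: "y \<in> Y1" "act (ginv (rep a)) x0 \<in> Wf y" using cov by blast
    then obtain i where "i < n" "y = nu i" using nu unfolding bij_betw_def by auto
    then have "\<exists>i. i < n \<and> act (ginv (rep a)) x0 \<in> Wf (nu i)" using y by blast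
    then show ?thesis unfolding chi_def by (rule someI_ex)
  qed
  have K: "act (ginv g) x0 \<in> Pf (nu (chi a))" if a: "a \<in> hom D F" and g: "g \<in> G" "cmp g r = a" for a g
  proof -
    define g' where "g' = rep a"
    have g': "g' \<in> G" "cmp g' r = a" using rep a g'_def by auto
    define k where "k = cmp (ginv g) g'"
    have k: "k \<in> G" using cmp_Aut ginv_Aut g g' k_def by blast
    have "cmp k r = cmp (ginv g) (cmp g' r)"
      using assoc[OF D(2) Aut_hom[OF g'(1)] ginv(1)[OF g(1)]] k_def by simp
    also have "\<dots> = r" using g' g ginv_cancel[OF g(1) D(2)] by simp
    finally have kr: "cmp k r = r" .
    have "cmp k (ginv g') = cmp (ginv g) (cmp g' (ginv g'))"
      using assoc[OF ginv(1)[OF g'(1)] Aut_hom[OF g'(1)] ginv(1)[OF g(1)]] k_def by simp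
    also have "\<dots> = ginv g" using ginv(3)[OF g'(1)] idr[OF ginv(1)[OF g(1)]] by simp
    finally have ckg: "cmp k (ginv g') = ginv g" .
    have "act (cmp k (ginv g')) x0 = act k (act (ginv g') x0)"
      using acomp k ginv_Aut[OF g'(1)] x0 by blast
    then have "act (ginv g) x0 = act k (act (ginv g') x0)" using ckg by simp
    moreover have "nu (chi a) \<in> Y1" using chi[OF a] nu unfolding bij_betw_def by auto
    moreover have "act (ginv g') x0 \<in> Wf (nu (chi a))" using chi[OF a] g'_def by simp
    ultimately show ?thesis using key[OF k kr, rule_format, of "nu (chi a)" "act (ginv g') x0"] by simp
  qed
  define S where "S = insert r ((\<lambda>gm. cmp (ginv gm) r) ` Gam)"
  have S: "finite S" "S \<subseteq> hom D F"
    using Gam D(2) cmp_hom ginv(1) by (auto simp: S_def)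
  have chiP: "chi \<in> hom D F \<rightarrow> {..<n}" using chi by auto
  obtain g where g: "g \<in> G" "\<forall>a\<in>S. \<forall>b\<in>S. chi (cmp g a) = chi (cmp g b)"
    using ramsey_F[OF R D(1) S chiP] by blast
  define x where "x = act (ginv g) x0"
  define P where "P = Pf (nu (chi (cmp g r)))"
  have gr: "cmp g r \<in> hom D F" using cmp_hom D(2) Aut_hom g(1) by blast
  have xP: "x \<in> P" unfolding x_def P_def using K[OF gr g(1)] by simp
  have "nu (chi (cmp g r)) \<in> Y1" using chi[OF gr] nu unfolding bij_betw_def by auto
  then have PPP: "P \<in> PP" unfolding P_def using fs Y1(1) by blast
  have xt: "x \<in> topspace X" unfolding x_def using clo ginv_Aut g x0 by blast
  have "act gm x \<in> P" if gm: "gm \<in> Gam" for gm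
  proof -
    have gmG: "gm \<in> G" using gm Gam by blast
    define g'' where "g'' = cmp g (ginv gm)"
    have g'': "g'' \<in> G" using cmp_Aut g ginv_Aut gmG g''_def by blast
    have eq: "cmp g'' r = cmp g (cmp (ginv gm) r)"
      using assoc[OF D(2) ginv(1)[OF gmG] Aut_hom[OF g(1)]] g''_def by simp
    have "cmp (ginv gm) r \<in> S" using gm by (auto simp: S_def)
    moreover have "r \<in> S" by (simp add: S_def)
    ultimately have "chi (cmp g (cmp (ginv gm) r)) = chi (cmp g r)" using g(2) by blast
    then have "chi (cmp g'' r) = chi (cmp g r)" using eq by simp
    moreover have "cmp g'' r \<in> hom D F" using cmp_hom D(2) Aut_hom g'' by blast
    ultimately have "act (ginv g'') x0 \<in> P" using K[OF _ g'' refl] P_def by simp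
    moreover have "ginv g'' = cmp gm (ginv g)"
      using ginv_cmp[OF g(1) ginv_Aut[OF gmG]] ginv_ginv[OF gmG] g''_def by simp
    moreover have "act (cmp gm (ginv g)) x0 = act gm x"
      using acomp[rule_format, OF gmG ginv_Aut[OF g(1)] x0] x_def by simp
    ultimately show ?thesis by simp
  qed
  then show ?thesis using xt xP PPP by blast
qed

end



context kpt begin

lemma dir1:
  assumes R: "Ramsey_property Obfin hom cmp"
  shows "extremely_amenable TYPE('x) G cmp (ident F) T"
  unfolding extremely_amenable_def
proof (intro allI impI)
  fix X :: "'x topology" and act :: "'m \<Rightarrow> 'x \<Rightarrow> 'x"
  assume H: "compact_space X \<and> Hausdorff_space X \<and> topspace X \<noteq> {} \<and>
        (\<forall>g\<in>G. \<forall>x\<in>topspace X. act g x \<in> topspace X) \<and>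
        (\<forall>x\<in>topspace X. act (ident F) x = x) \<and>
        (\<forall>g\<in>G. \<forall>h\<in>G. \<forall>x\<in>topspace X. act (cmp g h) x = act g (act h x)) \<and>
        continuous_map (prod_topology T X) X (\<lambda>(g, x). act g x)"
  then have cX: "compact_space X" and hX: "Hausdorff_space X" and ne: "topspace X \<noteq> {}"
    and clo: "\<forall>g\<in>G. \<forall>x\<in>topspace X. act g x \<in> topspace X"
    and aid: "\<forall>x\<in>topspace X. act (ident F) x = x"
    and acomp: "\<forall>g\<in>G. \<forall>h\<in>G. \<forall>x\<in>topspace X. act (cmp g h) x = act g (act h x)"
    and cont: "continuous_map (prod_topology T X) X (\<lambda>(g, x). act g x)"
    by auto
  have reg: "regular_space X" using compact_Hausdorff_imp_regular_space cX hX by blast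
  have nb: "neighbourhood_base_of (closedin X) X" using reg neighbourhood_base_of_closedin by blast
  have cg: "continuous_map X X (act g)" if g: "g \<in> G" for g
  proof -
    have "continuous_map X (prod_topology T X) (\<lambda>y. (g, y))"
      using g topspace_T by (intro continuous_map_pairedI) auto
    from continuous_map_compose[OF this cont] show ?thesis by (simp add: o_def)
  qed
  show "\<exists>x\<in>topspace X. \<forall>g\<in>G. act g x = x"
  proof (rule ccontr)
    assume nf: "\<not> (\<exists>x\<in>topspace X. \<forall>g\<in>G. act g x = x)"
    have loc: "\<exists>g A B V W. g \<in> G \<and> openin X A \<and> openin X B \<and> A \<inter> B = {} \<and> closedin X V \<and>
        openin X W \<and> x \<in> W \<and> W \<subseteq> V \<and> V \<subseteq> A \<and> (\<forall>y\<in>V. act g y \<in> B)"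
      if x: "x \<in> topspace X" for x
    proof -
      obtain g where g: "g \<in> G" "act g x \<noteq> x" using nf x by blast
      have gx: "act g x \<in> topspace X" using clo g x by blast
      obtain A0 B where AB: "openin X A0" "openin X B" "x \<in> A0" "act g x \<in> B" "disjnt A0 B"
        using hX[unfolded Hausdorff_space_def, rule_format, OF conjI[OF x conjI[OF gx g(2)[symmetric]]]] by blast
      define A1 where "A1 = A0 \<inter> {y \<in> topspace X. act g y \<in> B}"
      have A1: "openin X A1" "x \<in> A1"
        using openin_continuous_map_preimage[OF cg[OF g(1)] AB(2)] AB x by (auto simp: A1_def)
      obtain W V where WV: "openin X W" "closedin X V" "x \<in> W" "W \<subseteq> V" "V \<subseteq> A1"
        using nb[unfolded neighbourhood_base_of, rule_format, OF conjI[OF A1]] by blast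
      have "V \<subseteq> A0" "\<forall>y\<in>V. act g y \<in> B" "A0 \<inter> B = {}" using WV(5) AB(5) by (auto simp: A1_def disjnt_def)
      then show ?thesis using g AB WV by blast
    qed
    have "\<forall>x\<in>topspace X. \<exists>q. fst q \<in> G \<and> openin X (fst (snd q)) \<and> openin X (fst (snd (snd q))) \<and>
        fst (snd q) \<inter> fst (snd (snd q)) = {} \<and> closedin X (fst (snd (snd (snd q)))) \<and>
        openin X (snd (snd (snd (snd q)))) \<and> x \<in> snd (snd (snd (snd q))) \<and>
        snd (snd (snd (snd q))) \<subseteq> fst (snd (snd (snd q))) \<and> fst (snd (snd (snd q))) \<subseteq> fst (snd q) \<and>
        (\<forall>y\<in>fst (snd (snd (snd q))). act (fst q) y \<in> fst (snd (snd q)))"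
    proof
      fix x assume "x \<in> topspace X"
      from loc[OF this] obtain g A B V W where "g \<in> G \<and> openin X A \<and> openin X B \<and> A \<inter> B = {} \<and> closedin X V \<and>
        openin X W \<and> x \<in> W \<and> W \<subseteq> V \<and> V \<subseteq> A \<and> (\<forall>y\<in>V. act g y \<in> B)" by blast
      then show "\<exists>q. fst q \<in> G \<and> openin X (fst (snd q)) \<and> openin X (fst (snd (snd q))) \<and>
        fst (snd q) \<inter> fst (snd (snd q)) = {} \<and> closedin X (fst (snd (snd (snd q)))) \<and>
        openin X (snd (snd (snd (snd q)))) \<and> x \<in> snd (snd (snd (snd q))) \<and>
        snd (snd (snd (snd q))) \<subseteq> fst (snd (snd (snd q))) \<and> fst (snd (snd (snd q))) \<subseteq> fst (snd q) \<and>
        (\<forall>y\<in>fst (snd (snd (snd q))). act (fst q) y \<in> fst (snd (snd q)))"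
        by (intro exI[of _ "(g, A, B, V, W)"]) simp
    qed
    then obtain q where q: "\<forall>x\<in>topspace X. fst (q x) \<in> G \<and> openin X (fst (snd (q x))) \<and> openin X (fst (snd (snd (q x)))) \<and>
        fst (snd (q x)) \<inter> fst (snd (snd (q x))) = {} \<and> closedin X (fst (snd (snd (snd (q x))))) \<and>
        openin X (snd (snd (snd (snd (q x))))) \<and> x \<in> snd (snd (snd (snd (q x)))) \<and>
        snd (snd (snd (snd (q x)))) \<subseteq> fst (snd (snd (snd (q x)))) \<and> fst (snd (snd (snd (q x)))) \<subseteq> fst (snd (q x)) \<and>
        (\<forall>y\<in>fst (snd (snd (snd (q x)))). act (fst (q x)) y \<in> fst (snd (snd (q x))))"
      by (rule bchoice[THEN exE]) blast
    define gf where "gf x = fst (q x)" for x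
    define Af where "Af x = fst (snd (q x))" for x
    define Bf where "Bf x = fst (snd (snd (q x)))" for x
    define Vf where "Vf x = fst (snd (snd (snd (q x))))" for x
    define Wf where "Wf x = snd (snd (snd (snd (q x))))" for x
    have fs: "\<forall>x\<in>topspace X. gf x \<in> G \<and> openin X (Af x) \<and> openin X (Bf x) \<and> Af x \<inter> Bf x = {} \<and>
        closedin X (Vf x) \<and> openin X (Wf x) \<and> x \<in> Wf x \<and> Wf x \<subseteq> Vf x \<and> Vf x \<subseteq> Af x \<and>
        (\<forall>y\<in>Vf x. act (gf x) y \<in> Bf x)"
      using q unfolding gf_def Af_def Bf_def Vf_def Wf_def by blast
    have "\<exists>\<F>. finite \<F> \<and> \<F> \<subseteq> Wf ` topspace X \<and> topspace X \<subseteq> \<Union>\<F>"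
    proof -
      have "(\<forall>U\<in>Wf ` topspace X. openin X U) \<and> topspace X \<subseteq> \<Union>(Wf ` topspace X)" using fs by blast
      then show ?thesis using cX unfolding compact_space_alt by blast
    qed
    then obtain FF where FF: "finite FF" "FF \<subseteq> Wf ` topspace X" "topspace X \<subseteq> \<Union>FF" by blast
    obtain Y0 where Y0: "Y0 \<subseteq> topspace X" "finite Y0" "FF = Wf ` Y0"
      using finite_subset_image[OF FF(1) FF(2)] by blast
    define PP where "PP = {P. openin X P \<and> (\<forall>l\<in>Y0. P \<inter> Vf l = {} \<or> P \<inter> Bf l = {})}"
    have Popen: "\<forall>P\<in>PP. openin X P" by (simp add: PP_def)
    have Pcov: "\<forall>y\<in>topspace X. \<exists>P\<in>PP. y \<in> P"
    proof
      fix y assume y: "y \<in> topspace X"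
      define P where "P = \<Inter>(insert (topspace X) ((\<lambda>l. if y \<in> Vf l then Af l else topspace X - Vf l) ` Y0))"
      have "openin X P" unfolding P_def
      proof (rule openin_Inter)
        show "finite (insert (topspace X) ((\<lambda>l. if y \<in> Vf l then Af l else topspace X - Vf l) ` Y0))"
          using Y0 by simp
        show "insert (topspace X) ((\<lambda>l. if y \<in> Vf l then Af l else topspace X - Vf l) ` Y0) \<noteq> {}" by simp
        fix U assume "U \<in> insert (topspace X) ((\<lambda>l. if y \<in> Vf l then Af l else topspace X - Vf l) ` Y0)"
        then show "openin X U" using fs Y0(1) by (auto simp: openin_diff)
      qed
      moreover have "y \<in> P" using y fs Y0(1) by (auto simp: P_def)
      moreover have "\<forall>l\<in>Y0. P \<inter> Vf l = {} \<or> P \<inter> Bf l = {}"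
      proof
        fix l assume l: "l \<in> Y0"
        show "P \<inter> Vf l = {} \<or> P \<inter> Bf l = {}"
        proof (cases "y \<in> Vf l")
          case True
          then have "P \<subseteq> Af l" using l by (auto simp: P_def)
          then show ?thesis using fs l Y0(1) by blast
        next
          case False
          then have "P \<subseteq> topspace X - Vf l" using l by (auto simp: P_def)
          then show ?thesis by blast
        qed
      qed
      ultimately show "\<exists>P\<in>PP. y \<in> P" unfolding PP_def by blast
    qed
    have Gam: "finite (gf ` Y0)" "gf ` Y0 \<subseteq> G" using Y0 fs by auto
    obtain x P where xP: "x \<in> topspace X" "P \<in> PP" "x \<in> P" "\<forall>g\<in>gf ` Y0. act g x \<in> P"
      using core[OF R ne cX clo aid acomp cont Pcov Popen Gam] by blast
    obtain l where l: "l \<in> Y0" "x \<in> Wf l" using xP(1) FF(3) Y0(3) by blast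
    have lt: "l \<in> topspace X" using l Y0 by blast
    have xV: "x \<in> Vf l" using l fs lt by blast
    have "act (gf l) x \<in> Bf l" using fs lt xV by blast
    moreover have "act (gf l) x \<in> P" using xP l by blast
    moreover have "P \<inter> Vf l = {} \<or> P \<inter> Bf l = {}" using xP(2) l unfolding PP_def by blast
    ultimately show False using xV xP(3) by blast
  qed
qed

end



context kpt begin

abbreviation PT :: "'o \<Rightarrow> nat \<Rightarrow> ('m \<Rightarrow> nat) topology" where
  "PT A k \<equiv> product_topology (\<lambda>_. discrete_topology {..<k}) (hom A F)"

lemma open_coord:
  assumes "a \<in> hom A F"
  shows "openin (PT A k) {c\<in>topspace (PT A k). c a = v}"
proof -
  have "openin (discrete_topology {..<k}) ({v} \<inter> {..<k})" by simp
  from openin_continuous_map_preimage[OF continuous_map_product_projection[OF assms] this]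
  have "openin (PT A k) {c\<in>topspace (PT A k). c a \<in> {v} \<inter> {..<k}}" .
  moreover have "{c\<in>topspace (PT A k). c a \<in> {v} \<inter> {..<k}} = {c\<in>topspace (PT A k). c a = v}"
    using assms by (auto simp: PiE_def Pi_def)
  ultimately show ?thesis by simp
qed

lemma open_agree:
  assumes "finite S" "S \<subseteq> hom A F"
  shows "openin (PT A k) {c\<in>topspace (PT A k). \<forall>a\<in>S. c a = d a}"
proof -
  have eq: "{c\<in>topspace (PT A k). \<forall>a\<in>S. c a = d a} =
      \<Inter>(insert (topspace (PT A k)) ((\<lambda>a. {c\<in>topspace (PT A k). c a = d a}) ` S))" by auto
  show ?thesis unfolding eq
  proof (rule openin_Inter)
    fix U assume "U \<in> insert (topspace (PT A k)) ((\<lambda>a. {c\<in>topspace (PT A k). c a = d a}) ` S)"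
    then consider "U = topspace (PT A k)" | a where "a \<in> S" "U = {c\<in>topspace (PT A k). c a = d a}" by blast
    then show "openin (PT A k) U"
    proof cases
      case 1 then show ?thesis using openin_topspace by metis
    next
      case 2 then show ?thesis using open_coord assms by blast
    qed
  qed (use assms in auto)
qed

lemma closed_bad:
  assumes "A \<in> Obfin" "B \<in> Obfin" "W \<subseteq> hom B F"
  shows "closedin (PT A k) {c\<in>topspace (PT A k). \<forall>w\<in>W. 1 < card (c ` (cmp w ` hom A B))}"
proof -
  let ?Y = "{c\<in>topspace (PT A k). \<forall>w\<in>W. 1 < card (c ` (cmp w ` hom A B))}"
  have "openin (PT A k) (topspace (PT A k) - ?Y)"
  proof (subst openin_subopen, intro ballI)
    fix c assume c: "c \<in> topspace (PT A k) - ?Y"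
    then obtain w where w: "w \<in> W" "\<not> 1 < card (c ` (cmp w ` hom A B))" by blast
    have fin: "finite (cmp w ` hom A B)" using c3 assms unfolding C3_def by blast
    have sub: "cmp w ` hom A B \<subseteq> hom A F" using w assms cmp_hom by blast
    let ?N = "{c'\<in>topspace (PT A k). \<forall>a\<in>cmp w ` hom A B. c' a = c a}"
    have "openin (PT A k) ?N" by (rule open_agree[OF fin sub])
    moreover have "c \<in> ?N" using c by blast
    moreover have "?N \<subseteq> topspace (PT A k) - ?Y"
    proof
      fix c' assume c': "c' \<in> ?N"
      then have "c' ` (cmp w ` hom A B) = c ` (cmp w ` hom A B)" by (auto simp: image_iff)
      then have "\<not> 1 < card (c' ` (cmp w ` hom A B))" using w by simp
      then show "c' \<in> topspace (PT A k) - ?Y" using c' w by blast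
    qed
    ultimately show "\<exists>T. openin (PT A k) T \<and> c \<in> T \<and> T \<subseteq> topspace (PT A k) - ?Y" by blast
  qed
  then show ?thesis unfolding closedin_def by blast
qed


lemma ginv_ident: "ginv (ident F) = ident F"
  using inv_unique[OF ident_Aut ident_hom[OF FOb] idl[OF ident_hom[OF FOb]]] by simp

lemma dir2:
  assumes EA: "extremely_amenable TYPE('m \<Rightarrow> nat) G cmp (ident F) T"
  shows "Ramsey_property Obfin hom cmp"
proof (rule ccontr)
  assume "\<not> Ramsey_property Obfin hom cmp"
  then obtain k :: nat and A B where kAB: "2 \<le> k" "A \<in> Obfin" "B \<in> Obfin"
    and bad: "\<forall>C\<in>Obfin. \<exists>col\<in>hom A C \<rightarrow> {..<k}. \<forall>w\<in>hom B C. 1 < card (col ` ((\<lambda>x. cmp w x) ` hom A B))"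
    unfolding Ramsey_property_def by (auto simp: not_le)
  define M where "M w = {c\<in>topspace (PT A k). \<forall>w'\<in>{w}. 1 < card (c ` (cmp w' ` hom A B))}" for w
  define Y where "Y = {c\<in>topspace (PT A k). \<forall>w\<in>hom B F. 1 < card (c ` (cmp w ` hom A B))}"
  have Yclosed: "closedin (PT A k) Y" unfolding Y_def using closed_bad kAB by blast
  have Mclosed: "closedin (PT A k) (M w)" if "w \<in> hom B F" for w
    unfolding M_def using closed_bad[of A B "{w}" k] kAB that by blast
  have cP: "compact_space (PT A k)"
    by (simp add: compact_space_product_topology compact_space_discrete_topology)
  have hP: "Hausdorff_space (PT A k)"
    by (simp add: Hausdorff_space_product_topology)
  obtain w0 where w0: "w0 \<in> hom B F" using univ kAB unfolding universal_def by blast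
  have YM: "Y = \<Inter>(M ` hom B F)"
  proof
    show "Y \<subseteq> \<Inter>(M ` hom B F)" by (auto simp: Y_def M_def)
    show "\<Inter>(M ` hom B F) \<subseteq> Y"
    proof
      fix c assume c: "c \<in> \<Inter>(M ` hom B F)"
      then have "c \<in> M w0" using w0 by blast
      then have "c \<in> topspace (PT A k)" by (simp add: M_def)
      moreover have "\<forall>w\<in>hom B F. 1 < card (c ` (cmp w ` hom A B))" using c by (auto simp: M_def)
      ultimately show "c \<in> Y" by (simp add: Y_def)
    qed
  qed
  have fip: "\<Inter>FF \<noteq> {}" if FF: "finite FF" "FF \<subseteq> M ` hom B F" for FF
  proof -
    obtain W0 where W0: "W0 \<subseteq> hom B F" "finite W0" "FF = M ` W0"
      using finite_subset_image[OF FF] by blast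
    obtain D r where D: "D \<in> Obfin" "r \<in> hom D F" "\<forall>s\<in>W0. \<exists>X\<in>Obfin. \<exists>p\<in>hom X D. s = cmp r p"
      using amalg_finite[OF W0(2)] W0(1) kAB by blast
    have Dp: "\<exists>p\<in>hom B D. w = cmp r p" if w: "w \<in> W0" for w
    proof -
      obtain X p where "X \<in> Obfin" "p \<in> hom X D" "w = cmp r p" using D w by blast
      moreover have "w \<in> hom X F" using calculation cmp_hom D by blast
      ultimately show ?thesis using hom_uniq w W0(1) by blast
    qed
    obtain col where col: "col \<in> hom A D \<rightarrow> {..<k}" "\<forall>q\<in>hom B D. 1 < card (col ` ((\<lambda>x. cmp q x) ` hom A B))"
      using bad D(1) by blast
    define c where "c a = (if a \<in> hom A F then (if \<exists>b\<in>hom A D. a = cmp r b then col (THE b. b \<in> hom A D \<and> a = cmp r b) else 0) else undefined)" for a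
    have cr: "c (cmp r b) = col b" if b: "b \<in> hom A D" for b
    proof -
      have rb: "cmp r b \<in> hom A F" using cmp_hom b D(2) by blast
      have "(THE b'. b' \<in> hom A D \<and> cmp r b = cmp r b') = b"
        by (rule the_equality) (use b mono[OF D(2)] in auto)
      then show ?thesis using rb b by (auto simp: c_def)
    qed
    have cT: "c \<in> topspace (PT A k)"
    proof -
      have "c a < k" if a: "a \<in> hom A F" for a
      proof (cases "\<exists>b\<in>hom A D. a = cmp r b")
        case True
        then obtain b where "b \<in> hom A D" "a = cmp r b" by blast
        then show ?thesis using cr col(1) by auto
      next
        case False then show ?thesis using a kAB by (simp add: c_def)
      qed
      then show ?thesis by (auto simp: PiE_def extensional_def c_def)
    qed
    have "c \<in> M w" if w: "w \<in> W0" for w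
    proof -
      obtain p where p: "p \<in> hom B D" "w = cmp r p" using Dp w by blast
      have "c ` (cmp w ` hom A B) = col ` (cmp p ` hom A B)"
      proof -
        have "\<And>x. x \<in> hom A B \<Longrightarrow> c (cmp w x) = col (cmp p x)"
          using p assoc[OF _ p(1) D(2)] cr cmp_hom by metis
        then show ?thesis by (simp add: image_image cong: image_cong)
      qed
      then show ?thesis using col(2) p(1) cT by (simp add: M_def)
    qed
    then have "c \<in> \<Inter>FF" using W0(3) by blast
    then show ?thesis by blast
  qed
  have "\<Inter>(M ` hom B F) \<noteq> {}"
    using cP[unfolded compact_space_fip, rule_format, of "M ` hom B F"] Mclosed fip by blast
  then have Yne: "Y \<noteq> {}" using YM by simp
  have Ysub: "Y \<subseteq> topspace (PT A k)" by (auto simp: Y_def)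
  define X where "X = subtopology (PT A k) Y"
  have tX: "topspace X = Y" using Ysub by (auto simp: X_def)
  define act where "act g c = (\<lambda>a. if a \<in> hom A F then c (cmp (ginv g) a) else undefined)" for g and c :: "'m \<Rightarrow> nat"
  have act_T: "act g c \<in> topspace (PT A k)" if "g \<in> G" "c \<in> topspace (PT A k)" for g c
    using that cmp_hom ginv(1) by (auto simp: act_def PiE_def Pi_def extensional_def)
  have act_Y: "act g c \<in> Y" if g: "g \<in> G" and c: "c \<in> Y" for g c
  proof -
    have "1 < card (act g c ` (cmp w ` hom A B))" if w: "w \<in> hom B F" for w
    proof -
      have gw: "cmp (ginv g) w \<in> hom B F" using w ginv(1)[OF g] cmp_hom by blast
      have "act g c ` (cmp w ` hom A B) = c ` (cmp (cmp (ginv g) w) ` hom A B)"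
      proof -
        have "\<And>x. x \<in> hom A B \<Longrightarrow> act g c (cmp w x) = c (cmp (cmp (ginv g) w) x)"
          using assoc[OF _ w ginv(1)[OF g]] cmp_hom w by (auto simp: act_def)
        then show ?thesis by (simp add: image_image cong: image_cong)
      qed
      then show ?thesis using c gw by (simp add: Y_def)
    qed
    then show ?thesis using act_T g c by (simp add: Y_def)
  qed
  have act_id: "act (ident F) c = c" if c: "c \<in> Y" for c
  proof
    fix a show "act (ident F) c a = c a"
      using c idl by (auto simp: act_def ginv_ident Y_def PiE_def extensional_def)
  qed
  have act_comp: "act (cmp g h) c = act g (act h c)" if g: "g \<in> G" and h: "h \<in> G" for g h c
  proof
    fix a show "act (cmp g h) c a = act g (act h c) a"
    proof (cases "a \<in> hom A F")
      case True
      have "cmp (ginv (cmp g h)) a = cmp (ginv h) (cmp (ginv g) a)"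
        using ginv_cmp[OF g h] assoc[OF True ginv(1)[OF g] ginv(1)[OF h]] by simp
      moreover have "cmp (ginv g) a \<in> hom A F" using True ginv(1)[OF g] cmp_hom by blast
      ultimately show ?thesis using True by (simp add: act_def)
    qed (simp add: act_def)
  qed
  have cont: "continuous_map (prod_topology T X) X (\<lambda>(g, x). act g x)"
    unfolding X_def continuous_map_in_subtopology
  proof
    have tp: "topspace (prod_topology T (subtopology (PT A k) Y)) = G \<times> Y"
      using Ysub topspace_T by (auto simp: topspace_prod_topology)
    show "(\<lambda>(g, x). act g x) \<in> topspace (prod_topology T (subtopology (PT A k) Y)) \<rightarrow> Y"
      unfolding tp using act_Y by auto
    show "continuous_map (prod_topology T (subtopology (PT A k) Y)) (PT A k) (\<lambda>(g, x). act g x)"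
      unfolding continuous_map_componentwise
    proof (intro conjI ballI)
      show "(\<lambda>(g, x). act g x) ` topspace (prod_topology T (subtopology (PT A k) Y)) \<subseteq> extensional (hom A F)"
        by (auto simp: act_def extensional_def)
      fix a assume a: "a \<in> hom A F"
      show "continuous_map (prod_topology T (subtopology (PT A k) Y)) (discrete_topology {..<k}) (\<lambda>z. (case z of (g, x) \<Rightarrow> act g x) a)"
        unfolding continuous_map_def
      proof (intro conjI allI impI)
        show "(\<lambda>z. (case z of (g, x) \<Rightarrow> act g x) a) \<in> topspace (prod_topology T (subtopology (PT A k) Y)) \<rightarrow> topspace (discrete_topology {..<k})"
          unfolding tp using act_Y a Ysub by (force simp: PiE_def Pi_def act_def)
        fix U assume U: "openin (discrete_topology {..<k}) U"
        let ?S = "{z \<in> topspace (prod_topology T (subtopology (PT A k) Y)). (case z of (g, x) \<Rightarrow> act g x) a \<in> U}"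
        show "openin (prod_topology T (subtopology (PT A k) Y)) ?S"
        proof (subst openin_subopen, intro ballI)
          fix z assume z: "z \<in> ?S"
          obtain g0 c0 where z0: "z = (g0, c0)" "g0 \<in> G" "c0 \<in> Y" using z tp by auto
          define b where "b = cmp (ginv g0) a"
          have b: "b \<in> hom A F" using a ginv(1)[OF z0(2)] cmp_hom b_def by blast
          have val: "c0 b \<in> U" using z z0 a by (simp add: act_def b_def)
          let ?N = "N_F hom cmp ident F b a \<times> {c \<in> Y. c b = c0 b}"
          have o1: "openin T (N_F hom cmp ident F b a)" using N_open[OF kAB(2) b a] .
          have "{c \<in> Y. c b = c0 b} = {c\<in>topspace (PT A k). c b = c0 b} \<inter> Y" using Ysub by auto
          then have o2: "openin (subtopology (PT A k) Y) {c \<in> Y. c b = c0 b}"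
            unfolding openin_subtopology using open_coord[OF b, of k "c0 b"] by blast
          have "openin (prod_topology T (subtopology (PT A k) Y)) ?N"
            using o1 o2 by (simp add: openin_prod_Times_iff)
          moreover have "z \<in> ?N"
            using z0 ginv_cancel(2)[OF z0(2) a] by (simp add: N_F_def b_def)
          moreover have "?N \<subseteq> ?S"
          proof
            fix z' assume z': "z' \<in> ?N"
            then obtain g c where gc: "z' = (g, c)" "g \<in> G" "cmp g b = a" "c \<in> Y" "c b = c0 b"
              by (auto simp: N_F_def)
            have "cmp (ginv g) a = b" using gc ginv_cancel(1)[OF gc(2) b] by simp
            then have "act g c a = c0 b" using a gc by (simp add: act_def)
            then show "z' \<in> ?S" using gc val tp by simp
          qed
          ultimately show "\<exists>T'. openin (prod_topology T (subtopology (PT A k) Y)) T' \<and> z \<in> T' \<and> T' \<subseteq> ?S"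
            by blast
        qed
      qed
    qed
  qed
  have "\<exists>x\<in>topspace X. \<forall>g\<in>G. act g x = x"
  proof (rule EA[unfolded extremely_amenable_def, rule_format], intro conjI)
    show "compact_space X" unfolding X_def
      by (rule compact_space_subtopology[OF closedin_compact_space[OF cP Yclosed]])
    show "Hausdorff_space X" unfolding X_def using hP by (rule Hausdorff_space_subtopology)
    show "topspace X \<noteq> {}" using tX Yne by simp
    show "\<forall>g\<in>G. \<forall>x\<in>topspace X. act g x \<in> topspace X" using act_Y tX by simp
    show "\<forall>x\<in>topspace X. act (ident F) x = x" using act_id tX by simp
    show "\<forall>g\<in>G. \<forall>h\<in>G. \<forall>x\<in>topspace X. act (cmp g h) x = act g (act h x)" using act_comp by simp
    show "continuous_map (prod_topology T X) X (\<lambda>(g, x). act g x)" by (rule cont)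
  qed
  then obtain c where c: "c \<in> Y" "\<forall>g\<in>G. act g c = c" using tX by blast
  obtain a0 where a0: "a0 \<in> hom A F" using univ kAB unfolding universal_def by blast
  have const: "c a = c a0" if a: "a \<in> hom A F" for a
  proof -
    obtain g where g: "g \<in> G" "cmp g a0 = a"
      using homog[unfolded homogeneous_def, rule_format, OF kAB(2) a0 a] by blast
    have "act g c a = c a" using c g by simp
    moreover have "act g c a = c a0" using a g ginv_cancel(1)[OF g(1) a0] by (simp add: act_def)
    ultimately show ?thesis by simp
  qed
  have "c ` (cmp w0 ` hom A B) \<subseteq> {c a0}"
    using const cmp_hom w0 by blast
  then have "card (c ` (cmp w0 ` hom A B)) \<le> 1"
    using card_mono[of "{c a0}"] by fastforce
  moreover have "1 < card (c ` (cmp w0 ` hom A B))" using c(1) w0 by (simp add: Y_def)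
  ultimately show False by simp
qed

end

theorem theorem4p5:
  fixes Ob Obfin :: "'o set"
    and hom :: "'o \<Rightarrow> 'o \<Rightarrow> 'm set"
    and cmp :: "'m \<Rightarrow> 'm \<Rightarrow> 'm"
    and ident :: "'o \<Rightarrow> 'm"
    and F :: 'o
  assumes cat: "category Ob hom cmp ident"
    and sub: "Obfin \<subseteq> Ob"
    and "C1 Ob hom cmp" and "C2 Obfin" and "C3 Obfin hom"
    and "C4 Ob Obfin hom" and "C5 Obfin hom"
    and F: "F \<in> Ob"
    and "homogeneous Obfin hom cmp ident F"
    and "locally_finite Ob Obfin hom cmp F"
    and "universal Obfin hom F"
    and "finitely_separated Obfin hom cmp ident F"
  shows "(Ramsey_property Obfin hom cmp \<longrightarrow>
            extremely_amenable TYPE('x) (Aut hom cmp ident F) cmp (ident F)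
              (tau_F Obfin hom cmp ident F))
       \<and> (extremely_amenable TYPE(('m \<Rightarrow> nat) set set) (Aut hom cmp ident F) cmp (ident F)
              (tau_F Obfin hom cmp ident F)
            \<longrightarrow> Ramsey_property Obfin hom cmp)"
proof -
  interpret kpt Ob Obfin hom cmp ident F
    by (rule kpt.intro) (use assms in auto)
  have d1: "Ramsey_property Obfin hom cmp \<longrightarrow>
            extremely_amenable TYPE('x) (Aut hom cmp ident F) cmp (ident F) (tau_F Obfin hom cmp ident F)"
    using dir1 by blast
  have d2: "extremely_amenable TYPE(('m \<Rightarrow> nat) set set) (Aut hom cmp ident F) cmp (ident F)
              (tau_F Obfin hom cmp ident F) \<longrightarrow> Ramsey_property Obfin hom cmp"
  proof
    assume EA: "extremely_amenable TYPE(('m \<Rightarrow> nat) set set) (Aut hom cmp ident F) cmp (ident F)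
              (tau_F Obfin hom cmp ident F)"
    have inj: "inj (\<lambda>c :: 'm \<Rightarrow> nat. {{c}})" by (auto simp: inj_def)
    have "extremely_amenable TYPE('m \<Rightarrow> nat) (Aut hom cmp ident F) cmp (ident F) (tau_F Obfin hom cmp ident F)"
      by (rule EA_transfer[OF inj EA])
    then show "Ramsey_property Obfin hom cmp" by (rule dir2)
  qed
  from d1 d2 show ?thesis by blast
qed

end
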